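(* Let $1<\alpha<2$, let $M\ge8$ be even, and let $\epsilon$ satisfy $$\frac{2^\alpha\mu\theta_0}{(M-2)^\alpha}<\epsilon\le\mu\theta_0,$$ with $k_0=\big\lceil(\mu\theta_0/\epsilon)^{1/\alpha}\big\rceil+1$. Then $T-C=\widehat E+\widehat F$ for real symmetric matrices $\widehat E,\widehat F\in\mathbb R^{M\times M}$. These satisfy $\operatorname{rank}(\widehat E)=2k_0$, $$\|\widehat E\|_\infty<\mu\left[\frac{c_0}{2}-\frac{\theta}{(M-\frac12)^\alpha}\right],\qquad \|\widehat F\|_\infty<\epsilon .$$
   Context: Let $1<\alpha<2$, let $\gamma>0$ and $\tau>0$ be constants, and let $a<b$ be real numbers. Let $M$ be a positive integer, $h=(b-a)/(M+1)$ and $\mu=\gamma\tau/h^\alpha$. For $k\in\mathbb Z$ let $$c_k=(-1)^k\frac{\Gamma(\alpha+1)}{\Gamma(\alpha/2-k+1)\,\Gamma(\alpha/2+k+1)}.$$ Then $c_0>0$, $c_k=c_{-k}\le0$ for $k\ge1$, and $\sum_{k\ne0}|c_k|=c_0$. Let $T=\mu\,[c_{i-j}]_{i,j=1}^M$. For even $M$, let $C$ be the Strang circulant approximation of $T$: $C=\mu\,[s_{(i-j)\bmod M}]_{i,j=1}^M$, where - $s_k=c_k$ for $0\le k<M/2$, - $s_{M/2}=0$, - $s_k=c_{M-k}$ for $M/2<k<M$. Finally, define the constants $$\theta=\frac{\big(1-\frac{1+\alpha}{5+\alpha/2}\big)^{5+\alpha/2}e^{1+\alpha}\Gamma(\alpha+1)\sin(\pi\alpha/2)}{\pi\alpha},\qquad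 \theta_0=\frac{\sqrt2\,e^{13/12}\Gamma(\alpha+1)\sin(\pi\alpha/2)}{\pi\alpha}.$$ $\|\cdot\|_\infty$ is the maximum absolute row sum norm. *)

theory Defs
  imports "HOL-Analysis.Gamma_Function" "Jordan_Normal_Form.DL_Rank"
begin

text \<open>Coefficients c_k of the fractional centred difference (k an integer).\<close>
definition cfrac :: "real \<Rightarrow> int \<Rightarrow> real" where
  "cfrac \<alpha> k = (-1) powi k * Gamma (\<alpha> + 1) /
     (Gamma (\<alpha> / 2 - of_int k + 1) * Gamma (\<alpha> / 2 + of_int k + 1))"

definition hstep :: "real \<Rightarrow> real \<Rightarrow> nat \<Rightarrow> real" where
  "hstep a b M = (b - a) / (real M + 1)"

definition mu :: "real \<Rightarrow> real \<Rightarrow> real \<Rightarrow> real \<Rightarrow> real \<Rightarrow> nat \<Rightarrow> real" where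
  "mu \<alpha> \<gamma> \<tau> a b M = \<gamma> * \<tau> / (hstep a b M powr \<alpha>)"

text \<open>Toeplitz matrix T = mu [c_{i-j}] (0-based indices; only differences matter).\<close>
definition Tmat :: "real \<Rightarrow> real \<Rightarrow> real \<Rightarrow> real \<Rightarrow> real \<Rightarrow> nat \<Rightarrow> real mat" where
  "Tmat \<alpha> \<gamma> \<tau> a b M =
     mat M M (\<lambda>(i, j). mu \<alpha> \<gamma> \<tau> a b M * cfrac \<alpha> (int i - int j))"

text \<open>First column of the Strang circulant, for even M.\<close>
definition strang_s :: "real \<Rightarrow> nat \<Rightarrow> nat \<Rightarrow> real" where
  "strang_s \<alpha> M k =
     (if 2 * k < M then cfrac \<alpha> (int k)
      else if 2 * k = M then 0
      else cfrac \<alpha> (int M - int k))"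

definition Cmat :: "real \<Rightarrow> real \<Rightarrow> real \<Rightarrow> real \<Rightarrow> real \<Rightarrow> nat \<Rightarrow> real mat" where
  "Cmat \<alpha> \<gamma> \<tau> a b M =
     mat M M (\<lambda>(i, j). mu \<alpha> \<gamma> \<tau> a b M *
        strang_s \<alpha> M (nat ((int i - int j) mod int M)))"

definition theta :: "real \<Rightarrow> real" where
  "theta \<alpha> = (1 - (1 + \<alpha>) / (5 + \<alpha> / 2)) powr (5 + \<alpha> / 2) * exp (1 + \<alpha>)
      * Gamma (\<alpha> + 1) * sin (pi * \<alpha> / 2) / (pi * \<alpha>)"

definition theta0 :: "real \<Rightarrow> real" where
  "theta0 \<alpha> = sqrt 2 * exp (13 / 12) * Gamma (\<alpha> + 1) * sin (pi * \<alpha> / 2) / (pi * \<alpha>)"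

definition norm_inf :: "real mat \<Rightarrow> real" where
  "norm_inf A = (MAX i \<in> {..<dim_row A}. \<Sum>j<dim_col A. \<bar>A $$ (i, j)\<bar>)"

end

theory Submission
  imports Defs
begin

lemma gamma_refl_real:
  fixes x :: real assumes "x \<notin> \<int>"
  shows "Gamma x * Gamma (1 - x) = pi / sin (pi * x)"
proof -
  have "Gamma (complex_of_real x) * Gamma (1 - complex_of_real x) =
        of_real pi / sin (of_real pi * complex_of_real x)"
    by (rule Gamma_reflection_complex)
  also have "1 - complex_of_real x = complex_of_real (1 - x)" by simp
  also have "sin (of_real pi * complex_of_real x) = complex_of_real (sin (pi * x))"
    by (metis of_real_mult sin_of_real)
  finally have "complex_of_real (Gamma x * Gamma (1 - x)) = complex_of_real (pi / sin (pi * x))"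
    by (simp only: Gamma_complex_of_real of_real_mult of_real_divide)
  thus ?thesis by (simp only: of_real_eq_iff)
qed

lemma half_alpha_not_int:
  fixes \<alpha> :: real assumes "1 < \<alpha>" "\<alpha> < 2"
  shows "\<alpha>/2 - real k \<notin> \<int>"
proof
  assume "\<alpha>/2 - real k \<in> \<int>"
  hence "\<alpha>/2 - real k + real k \<in> \<int>" by (intro Ints_add) auto
  then obtain z :: int where "\<alpha>/2 = of_int z" by (auto elim: Ints_cases)
  moreover have "0 < \<alpha>/2" "\<alpha>/2 < 1" using assms by auto
  ultimately have "0 < z" "z < 1" by auto
  thus False by simp
qed

lemma not_int_nonpos: "(x::real) \<notin> \<int> \<Longrightarrow> x \<notin> \<int>\<^sub>\<le>\<^sub>0"
  using nonpos_Ints_subset_Ints by blast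

lemma aux_mult: "(A::real) = u*B \<Longrightarrow> C = w*D \<Longrightarrow> w = -u \<Longrightarrow> B*C = -(A*D)"
  by simp

lemma gamma_prod_shift:
  fixes \<alpha> :: real assumes "1 < \<alpha>" "\<alpha> < 2"
  shows "Gamma (\<alpha>/2 - real j) * Gamma (real j + 1 - \<alpha>/2) = (-1)^j * pi / sin (pi * (\<alpha>/2))"
proof (induction j)
  case 0
  have "\<alpha>/2 \<notin> \<int>" using half_alpha_not_int[OF assms, of 0] by simp
  from gamma_refl_real[OF this] show ?case by (simp add: algebra_simps)
next
  case (Suc j)
  have ni: "\<alpha>/2 - real (Suc j) \<notin> \<int>" by (rule half_alpha_not_int[OF assms])
  have e1: "Gamma (\<alpha>/2 - real (Suc j) + 1) = (\<alpha>/2 - real (Suc j)) * Gamma (\<alpha>/2 - real (Suc j))"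
    by (rule Gamma_plus1[OF not_int_nonpos[OF ni]])
  have ni2: "real j + 1 - \<alpha>/2 \<notin> \<int>"
  proof
    assume "real j + 1 - \<alpha>/2 \<in> \<int>"
    hence "- (real j + 1 - \<alpha>/2) \<in> \<int>" by (rule Ints_minus)
    moreover have "- (real j + 1 - \<alpha>/2) = \<alpha>/2 - real (Suc j)" by simp
    ultimately show False using ni by simp
  qed
  have e2: "Gamma (real j + 1 - \<alpha>/2 + 1) = (real j + 1 - \<alpha>/2) * Gamma (real j + 1 - \<alpha>/2)"
    by (rule Gamma_plus1[OF not_int_nonpos[OF ni2]])
  have ne: "\<alpha>/2 - real (Suc j) \<noteq> 0" using assms by simp
  have a1: "\<alpha>/2 - real (Suc j) + 1 = \<alpha>/2 - real j" by simp
  have a2: "real (Suc j) + 1 - \<alpha>/2 = real j + 1 - \<alpha>/2 + 1" by simp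
  have e1': "Gamma (\<alpha>/2 - real j) = (\<alpha>/2 - real (Suc j)) * Gamma (\<alpha>/2 - real (Suc j))"
    using e1 a1 by metis
  have e2': "Gamma (real (Suc j) + 1 - \<alpha>/2) = (real j + 1 - \<alpha>/2) * Gamma (real j + 1 - \<alpha>/2)"
    using e2 a2 by metis
  have w: "real j + 1 - \<alpha>/2 = - (\<alpha>/2 - real (Suc j))" by simp
  have "Gamma (\<alpha>/2 - real (Suc j)) * Gamma (real (Suc j) + 1 - \<alpha>/2)
      = - (Gamma (\<alpha>/2 - real j) * Gamma (real j + 1 - \<alpha>/2))"
    by (rule aux_mult[OF e1' e2' w])
  also have "\<dots> = (-1)^(Suc j) * pi / sin (pi * (\<alpha>/2))" using Suc.IH by simp
  finally show ?case .
qed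

definition kap :: "real \<Rightarrow> real" where
  "kap \<alpha> = Gamma (\<alpha> + 1) * sin (pi * \<alpha> / 2) / (pi * \<alpha>)"

definition gg :: "real \<Rightarrow> nat \<Rightarrow> real" where
  "gg \<alpha> k = kap \<alpha> * Gamma (real k - \<alpha>/2) / Gamma (real k + \<alpha>/2)"

definition pp :: "real \<Rightarrow> nat \<Rightarrow> real" where
  "pp \<alpha> k = - cfrac \<alpha> (int k)"

lemma sin_pos_alpha: "1 < \<alpha> \<Longrightarrow> \<alpha> < 2 \<Longrightarrow> sin (pi * \<alpha> / 2) > 0"
  by (rule sin_gt_zero) (auto simp: field_simps)

lemma kap_pos: "1 < \<alpha> \<Longrightarrow> \<alpha> < 2 \<Longrightarrow> kap \<alpha> > 0"
  unfolding kap_def using sin_pos_alpha[of \<alpha>] by (intro divide_pos_pos mult_pos_pos Gamma_real_pos) auto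

lemma pp_eq:
  fixes \<alpha> :: real assumes "1 < \<alpha>" "\<alpha> < 2" "1 \<le> k"
  shows "pp \<alpha> k = \<alpha> * kap \<alpha> * Gamma (real k - \<alpha>/2) / Gamma (real k + 1 + \<alpha>/2)"
proof -
  obtain j where k: "k = Suc j" using assms(3) by (cases k) auto
  have g: "Gamma (\<alpha>/2 - real j) * Gamma (real j + 1 - \<alpha>/2) = (-1)^j * pi / sin (pi * (\<alpha>/2))"
    by (rule gamma_prod_shift[OF assms(1,2)])
  have s: "sin (pi * (\<alpha>/2)) > 0" using sin_pos_alpha[OF assms(1,2)] by (simp add: field_simps)
  have p1: "Gamma (real k - \<alpha>/2) > 0" using assms by (intro Gamma_real_pos) auto
  have p2: "Gamma (real k + 1 + \<alpha>/2) > 0" using assms by (intro Gamma_real_pos) auto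
  have ga: "Gamma (\<alpha>/2 - real j) = (-1)^j * pi / (sin (pi * (\<alpha>/2)) * Gamma (real k - \<alpha>/2))"
    using g s p1 k by (simp add: field_simps)
  have pw: "(-1::real) powi int k = (-1)^k" by (simp add: power_int_def)
  have "cfrac \<alpha> (int k) = (-1)^k * Gamma (\<alpha> + 1) /
     (Gamma (\<alpha>/2 - real j) * Gamma (\<alpha> / 2 + real k + 1))"
    unfolding cfrac_def pw using k by simp
  also have "\<dots> = - (\<alpha> * kap \<alpha> * Gamma (real k - \<alpha>/2) / Gamma (real k + 1 + \<alpha>/2))"
  proof -
    have q: "\<alpha> / 2 + real k + 1 = real k + 1 + \<alpha>/2" by simp
    have sn: "sin (pi * \<alpha> / 2) = sin (pi * (\<alpha>/2))" by simp
    have sg: "(-1::real)^k = - ((-1)^j)" using k by simp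
    have sg0: "(-1::real)^j \<noteq> 0" by simp
    show ?thesis unfolding ga kap_def q sn sg
      using s p1 p2 sg0 assms pi_gt_zero
      by (simp add: field_simps del: power_minus1_even)
  qed
  finally show ?thesis unfolding pp_def by simp
qed

lemma gp1: "(x::real) > 0 \<Longrightarrow> Gamma (x + 1) = x * Gamma x"
  by (rule Gamma_plus1) (auto dest: nonpos_Ints_nonpos)

lemma gg_pos:
  assumes "1 < \<alpha>" "\<alpha> < 2" "1 \<le> k" shows "gg \<alpha> k > 0"
  unfolding gg_def using kap_pos[OF assms(1,2)] assms
  by (intro divide_pos_pos mult_pos_pos Gamma_real_pos) auto

lemma pp_tele:
  fixes \<alpha> :: real assumes "1 < \<alpha>" "\<alpha> < 2" "1 \<le> k"
  shows "pp \<alpha> k = gg \<alpha> k - gg \<alpha> (k + 1)"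
proof -
  define x where "x = real k - \<alpha>/2"
  define y where "y = real k + \<alpha>/2"
  have x: "x > 0" and y: "y > 0" using assms by (auto simp: x_def y_def)
  have e1: "Gamma (real (k+1) - \<alpha>/2) = x * Gamma x"
    using gp1[OF x] by (simp add: x_def algebra_simps)
  have e2: "Gamma (real (k+1) + \<alpha>/2) = y * Gamma y"
    using gp1[OF y] by (simp add: y_def algebra_simps)
  have e3: "Gamma (real k + 1 + \<alpha>/2) = y * Gamma y"
    using gp1[OF y] by (simp add: y_def algebra_simps)
  have gx: "Gamma x > 0" using x by simp
  have gy: "Gamma y > 0" using y by simp
  have yx: "y - x = \<alpha>" by (simp add: x_def y_def)
  have "pp \<alpha> k = \<alpha> * kap \<alpha> * Gamma x / (y * Gamma y)"
    unfolding pp_eq[OF assms] e3 x_def by simp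
  also have "\<dots> = kap \<alpha> * Gamma x * (y - x) / (y * Gamma y)"
    unfolding yx by (simp add: mult.commute mult.left_commute)
  also have "\<dots> = kap \<alpha> * Gamma x / Gamma y - kap \<alpha> * (x * Gamma x) / (y * Gamma y)"
    using gx gy y by (simp add: field_simps less_imp_neq[OF gy, symmetric])
  also have "\<dots> = gg \<alpha> k - gg \<alpha> (k + 1)"
    unfolding gg_def e1 e2 by (simp add: x_def y_def)
  finally show ?thesis .
qed

lemma pp_pos:
  fixes \<alpha> :: real assumes "1 < \<alpha>" "\<alpha> < 2" "1 \<le> k"
  shows "pp \<alpha> k > 0"
  unfolding pp_eq[OF assms] using kap_pos[OF assms(1,2)] assms
  by (intro divide_pos_pos mult_pos_pos Gamma_real_pos) auto

lemma pp_step: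
  fixes \<alpha> :: real assumes "1 < \<alpha>" "\<alpha> < 2" "1 \<le> k"
  shows "pp \<alpha> (k+1) < pp \<alpha> k"
proof -
  define x where "x = real k - \<alpha>/2"
  define y where "y = real k + 1 + \<alpha>/2"
  have x: "x > 0" and y: "y > 0" using assms by (auto simp: x_def y_def)
  have e1: "Gamma (real (k+1) - \<alpha>/2) = x * Gamma x"
    using gp1[OF x] by (simp add: x_def algebra_simps)
  have e2: "Gamma (real (k+1) + 1 + \<alpha>/2) = y * Gamma y"
    using gp1[OF y] by (simp add: y_def algebra_simps)
  have gx: "Gamma x > 0" using x by simp
  have gy: "Gamma y > 0" using y by simp
  have K: "\<alpha> * kap \<alpha> > 0" using kap_pos[OF assms(1,2)] assms by simp
  have "pp \<alpha> (k+1) = \<alpha> * kap \<alpha> * Gamma (real (k+1) - \<alpha>/2) / Gamma (real (k+1) + 1 + \<alpha>/2)"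
    by (rule pp_eq) (use assms in auto)
  also have "\<dots> = (\<alpha> * kap \<alpha> * Gamma x / Gamma y) * (x / y)"
    unfolding e1 e2 using gy y by (simp add: field_simps)
  finally have "pp \<alpha> (k+1) = (\<alpha> * kap \<alpha> * Gamma x / Gamma y) * (x / y)" .
  also have "\<dots> < (\<alpha> * kap \<alpha> * Gamma x / Gamma y) * 1"
    using K gx gy x y assms by (intro mult_strict_left_mono) (auto simp: x_def y_def)
  also have "\<dots> = pp \<alpha> k" unfolding pp_eq[OF assms] x_def y_def by simp
  finally show ?thesis .
qed

lemma pp_mono:
  fixes \<alpha> :: real assumes "1 < \<alpha>" "\<alpha> < 2" "1 \<le> i" "i < j"
  shows "pp \<alpha> j < pp \<alpha> i"
  using assms(4)
proof (induction j)
  case 0 thus ?case by simp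
next
  case (Suc n)
  show ?case
  proof (cases "i = n")
    case True thus ?thesis using pp_step[OF assms(1-3)] by simp
  next
    case False
    hence "i < n" using Suc.prems by simp
    thus ?thesis using Suc.IH pp_step[OF assms(1,2), of n] assms(3) by simp
  qed
qed

lemma c0_half:
  fixes \<alpha> :: real assumes "1 < \<alpha>" "\<alpha> < 2"
  shows "cfrac \<alpha> 0 / 2 = gg \<alpha> 1"
proof -
  define h where "h = \<alpha>/2"
  have h: "h > 0" using assms by (simp add: h_def)
  have ni: "h \<notin> \<int>" using half_alpha_not_int[OF assms, of 0] by (simp add: h_def)
  have r: "Gamma h * Gamma (1 - h) = pi / sin (pi * h)" by (rule gamma_refl_real[OF ni])
  have s: "sin (pi * h) > 0" using sin_pos_alpha[OF assms] by (simp add: h_def field_simps)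
  have g1: "Gamma (h + 1) = h * Gamma h" by (rule gp1[OF h])
  have gh: "Gamma h > 0" using h by simp
  have gm: "Gamma (1 - h) = pi / (sin (pi * h) * Gamma h)" using r gh s by (simp add: field_simps)
  have "cfrac \<alpha> 0 / 2 = Gamma (\<alpha> + 1) / (Gamma (h + 1) * Gamma (h + 1)) / 2"
    unfolding cfrac_def h_def by simp
  also have "\<dots> = gg \<alpha> 1"
    unfolding gg_def kap_def
    using gm g1 gh s h pi_gt_zero assms
    by (simp add: h_def field_simps)
  finally show ?thesis .
qed

lemma lnGamma_convex:
  fixes u v t :: real assumes "u > 0" "v > 0" "0 \<le> t" "t \<le> 1"
  shows "ln (Gamma ((1 - t) * u + t * v)) \<le> (1 - t) * ln (Gamma u) + t * ln (Gamma v)"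
  using convex_onD[OF log_convex_Gamma_real, of t u v] assms by (simp add: o_def)

lemma LC1:
  fixes x s :: real assumes "x > 0" "0 \<le> s" "s \<le> 1"
  shows "Gamma (x + s) \<le> Gamma x * x powr s"
proof -
  have "ln (Gamma ((1 - s) * x + s * (x + 1))) \<le> (1 - s) * ln (Gamma x) + s * ln (Gamma (x + 1))"
    using lnGamma_convex[of x "x+1" s] assms by simp
  also have "ln (Gamma (x + 1)) = ln x + ln (Gamma x)"
    using gp1[OF assms(1)] assms(1) less_imp_neq[OF Gamma_real_pos[OF assms(1)]] by (simp add: ln_mult)
  finally have "ln (Gamma (x + s)) \<le> ln (Gamma x) + s * ln x"
    by (simp add: algebra_simps)
  hence "exp (ln (Gamma (x + s))) \<le> exp (ln (Gamma x) + s * ln x)" by simp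
  also have "exp (ln (Gamma x) + s * ln x) = Gamma x * x powr s"
    using assms by (simp add: exp_add powr_def)
  finally show ?thesis using assms by simp
qed

lemma LC2:
  fixes x s :: real assumes "x > 0" "0 \<le> s" "s \<le> 1"
  shows "Gamma (x + 1) \<le> Gamma (x + s) * (x + s) powr (1 - s)"
proof -
  have xs: "x + s > 0" using assms by simp
  have "ln (Gamma ((1 - (1 - s)) * (x + s) + (1 - s) * (x + s + 1)))
        \<le> (1 - (1 - s)) * ln (Gamma (x + s)) + (1 - s) * ln (Gamma (x + s + 1))"
    using lnGamma_convex[of "x+s" "x+s+1" "1-s"] assms by simp
  also have "ln (Gamma (x + s + 1)) = ln (x + s) + ln (Gamma (x + s))"
    using gp1[OF xs] xs less_imp_neq[OF Gamma_real_pos[OF xs]] by (simp add: ln_mult)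
  also have "(1 - (1 - s)) * (x + s) + (1 - s) * (x + s + 1) = x + 1"
    by (simp add: algebra_simps)
  finally have "ln (Gamma (x + 1)) \<le> ln (Gamma (x + s)) + (1 - s) * ln (x + s)"
    by (simp add: algebra_simps)
  hence "exp (ln (Gamma (x + 1))) \<le> exp (ln (Gamma (x + s)) + (1 - s) * ln (x + s))" by simp
  also have "exp (ln (Gamma (x + s)) + (1 - s) * ln (x + s)) = Gamma (x + s) * (x + s) powr (1 - s)"
    using xs by (simp add: exp_add powr_def)
  finally show ?thesis using assms by simp
qed

lemma ratio_upper:
  fixes \<alpha> :: real assumes "1 < \<alpha>" "\<alpha> < 2" "1 \<le> k"
  shows "(real k - \<alpha>/2) powr \<alpha> * Gamma (real k - \<alpha>/2) \<le> Gamma (real k + \<alpha>/2)"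
proof -
  define x where "x = real k - \<alpha>/2"
  define s where "s = \<alpha> - 1"
  have x: "x > 0" using assms by (simp add: x_def)
  have s: "0 \<le> s" "s \<le> 1" using assms by (auto simp: s_def)
  have xs: "x + s > 0" using x s by simp
  have l2: "x * Gamma x \<le> Gamma (x + s) * (x + s) powr (1 - s)"
    using LC2[OF x s] gp1[OF x] by simp
  have "(x + s) powr s * (x * Gamma x) \<le> (x + s) powr s * (Gamma (x + s) * (x + s) powr (1 - s))"
    using l2 by (intro mult_left_mono) auto
  also have "\<dots> = Gamma (x + s) * ((x + s) powr s * (x + s) powr (1 - s))" by simp
  also have "(x + s) powr s * (x + s) powr (1 - s) = x + s"
    using xs by (simp add: powr_add[symmetric])
  finally have A: "(x + s) powr s * (x * Gamma x) \<le> Gamma (x + s) * (x + s)" .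
  have xa: "x powr \<alpha> = x powr (s + 1)" by (simp add: s_def)
  have "x powr \<alpha> * Gamma x = x powr s * (x * Gamma x)"
    unfolding xa using x by (simp add: powr_add)
  also have "\<dots> \<le> (x + s) powr s * (x * Gamma x)"
    using x s by (intro mult_right_mono powr_mono2) auto
  also have "\<dots> \<le> (x + s) * Gamma (x + s)" using A by (simp add: mult.commute)
  also have "\<dots> = Gamma (x + s + 1)" using gp1[OF xs] by simp
  also have "x + s + 1 = real k + \<alpha>/2" by (simp add: x_def s_def)
  finally show ?thesis unfolding x_def .
qed

lemma ratio_lower:
  fixes \<alpha> :: real assumes "1 < \<alpha>" "\<alpha> < 2" "1 \<le> k"
  shows "Gamma (real k + \<alpha>/2) \<le> (real k + \<alpha>/2 - 1) powr \<alpha> * Gamma (real k - \<alpha>/2)"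
proof -
  define x where "x = real k - \<alpha>/2"
  define s where "s = \<alpha> - 1"
  have x: "x > 0" using assms by (simp add: x_def)
  have s: "0 \<le> s" "s \<le> 1" using assms by (auto simp: s_def)
  have xs: "x + s > 0" using x s by simp
  have e: "real k + \<alpha>/2 = x + s + 1" by (simp add: x_def s_def)
  have "Gamma (real k + \<alpha>/2) = Gamma (x + s + 1)" by (simp only: e)
  also have "\<dots> = (x + s) * Gamma (x + s)" using gp1[OF xs] by simp
  also have "\<dots> \<le> (x + s) * (Gamma x * x powr s)"
    using LC1[OF x s] xs by (intro mult_left_mono) auto
  also have "\<dots> \<le> (x + s) * (Gamma x * (x + s) powr s)"
    using x s xs by (intro mult_left_mono powr_mono2) auto
  also have "\<dots> = (x + s) powr (s + 1) * Gamma x"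
    using xs by (simp add: powr_add)
  also have "s + 1 = \<alpha>" by (simp add: s_def)
  also have "x + s = real k + \<alpha>/2 - 1" by (simp add: x_def s_def)
  finally show ?thesis unfolding x_def .
qed

lemma tri_kernel:
  fixes A :: "real mat"
  assumes A: "A \<in> carrier_mat m n"
  and tau: "\<forall>b<n. \<tau> b < m \<and> A $$ (\<tau> b, b) \<noteq> 0"
  and tri: "\<forall>b<n. \<forall>b'<n. b' \<noteq> b \<and> A $$ (\<tau> b, b') \<noteq> 0 \<longrightarrow> key b' < (key b :: nat)"
  and v: "v \<in> carrier_vec n" and Av: "A *\<^sub>v v = 0\<^sub>v m"
  shows "v = 0\<^sub>v n"
proof -
  have main: "\<forall>b. b < n \<longrightarrow> key b = t \<longrightarrow> v $ b = 0" for t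
  proof (induction t rule: less_induct)
    case (less t)
    show ?case
    proof (intro allI impI)
      fix b assume b: "b < n" "key b = t"
      have tb: "\<tau> b < m" using tau b by simp
      have "0 = (A *\<^sub>v v) $ \<tau> b" using Av tb by simp
      also have "\<dots> = (\<Sum>j\<in>{0..<n}. A $$ (\<tau> b, j) * v $ j)"
        using A v tb by (simp add: scalar_prod_def)
      also have "\<dots> = A $$ (\<tau> b, b) * v $ b + (\<Sum>j\<in>{0..<n} - {b}. A $$ (\<tau> b, j) * v $ j)"
        using b by (subst sum.remove[of _ b]) auto
      also have "(\<Sum>j\<in>{0..<n} - {b}. A $$ (\<tau> b, j) * v $ j) = 0"
      proof (rule sum.neutral, intro ballI)
        fix j assume j: "j \<in> {0..<n} - {b}"
        show "A $$ (\<tau> b, j) * v $ j = 0"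
        proof (cases "A $$ (\<tau> b, j) = 0")
          case False
          hence "key j < t" using tri b j by auto
          hence "v $ j = 0" using less.IH j by auto
          thus ?thesis by simp
        qed simp
      qed
      finally have "A $$ (\<tau> b, b) * v $ b = 0" by simp
      thus "v $ b = 0" using tau b by simp
    qed
  qed
  show ?thesis
    by (rule eq_vecI) (use main v in auto)
qed

definition ad :: "nat \<Rightarrow> nat \<Rightarrow> nat" where
  "ad i j = (if j \<le> i then i - j else j - i)"

lemma rank_E:
  fixes h :: "nat \<Rightarrow> real" and M k :: nat
  assumes k1: "1 \<le> k" and kM: "2*k \<le> M" and hnz: "h (M - k) \<noteq> 0"
  shows "vec_space.rank M (mat M M (\<lambda>(i,j). if M - k \<le> ad i j then h (ad i j) else 0)) = 2*k"
proof -
  interpret V: vec_space "TYPE(real)" M .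
  define E where "E = mat M M (\<lambda>(i,j). if M - k \<le> ad i j then h (ad i j) else 0)"
  have E: "E \<in> carrier_mat M M" unfolding E_def by simp
  define cm where "cm b = (if b < k then b else M - 2*k + b)" for b
  define E' where "E' = mat M (2*k) (\<lambda>(i,b). E $$ (i, cm b))"
  define \<tau> where "\<tau> b = (if b < k then M - k + b else b - k)" for b
  define key where "key b = (if b < k then b else 3*k - b)" for b
  have E': "E' \<in> carrier_mat M (2*k)" unfolding E'_def by simp
  have cmM: "cm b < M" if "b < 2*k" for b using that kM by (auto simp: cm_def)
  have colE': "col E' b = col E (cm b)" if "b < 2*k" for b
    using that cmM[OF that] E by (auto intro!: eq_vecI simp: E'_def)
  have E'idx: "E' $$ (i, b) = (if M - k \<le> ad i (cm b) then h (ad i (cm b)) else 0)"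
    if "i < M" "b < 2*k" for i b
    using that cmM[OF that(2)] by (simp add: E'_def E_def)
  have tau: "\<forall>b<2*k. \<tau> b < M \<and> E' $$ (\<tau> b, b) \<noteq> 0"
  proof (intro allI impI)
    fix b assume b: "b < 2*k"
    have t: "\<tau> b < M" using b kM by (auto simp: \<tau>_def)
    have "ad (\<tau> b) (cm b) = M - k" using b kM by (auto simp: \<tau>_def cm_def ad_def)
    thus "\<tau> b < M \<and> E' $$ (\<tau> b, b) \<noteq> 0" using t E'idx[OF t b] hnz by simp
  qed
  have tri: "\<forall>b<2*k. \<forall>b'<2*k. b' \<noteq> b \<and> E' $$ (\<tau> b, b') \<noteq> 0 \<longrightarrow> key b' < key b"
  proof (intro allI impI)
    fix b b' assume b: "b < 2*k" and b': "b' < 2*k" and nz: "b' \<noteq> b \<and> E' $$ (\<tau> b, b') \<noteq> 0"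
    have t: "\<tau> b < M" using tau b by simp
    have A: "M - k \<le> ad (\<tau> b) (cm b')" using nz E'idx[OF t b'] by (auto split: if_splits)
    have ne: "b' \<noteq> b" using nz by simp
    show "key b' < key b"
    proof (cases "b < k")
      case bk: True
      hence tb: "\<tau> b = M - k + b" by (simp add: \<tau>_def)
      show ?thesis
      proof (cases "b' < k")
        case True
        hence cb: "cm b' = b'" by (simp add: cm_def)
        have le: "b' \<le> M - k + b" using True kM by linarith
        have adv: "ad (\<tau> b) (cm b') = M - k + b - b'" unfolding tb cb ad_def using le by simp
        have e2: "(M - k + b - b') + b' = (M - k) + b" using le by simp
        have "b' \<le> b"
        proof (rule ccontr)
          assume "\<not> b' \<le> b"
          hence "b < b'" by simp
          hence "M - k + b - b' < M - k" using e2 by linarith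
          thus False using A adv by simp
        qed
        thus ?thesis using True bk ne by (simp add: key_def)
      next
        case False
        hence cb: "cm b' = M - 2*k + b'" by (simp add: cm_def)
        have "ad (\<tau> b) (cm b') < k" unfolding tb cb ad_def using False bk b' kM by auto
        thus ?thesis using A kM by linarith
      qed
    next
      case bk: False
      hence tb: "\<tau> b = b - k" by (simp add: \<tau>_def)
      show ?thesis
      proof (cases "b' < k")
        case True
        hence cb: "cm b' = b'" by (simp add: cm_def)
        have "ad (\<tau> b) (cm b') < k" unfolding tb cb ad_def using True bk b kM by auto
        thus ?thesis using A kM by linarith
      next
        case False
        hence cb: "cm b' = M - 2*k + b'" by (simp add: cm_def)
        have le: "b - k < M - 2*k + b'" using False bk b kM by linarith
        obtain c where c: "b = k + c" using le_Suc_ex[of k b] bk by auto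
        obtain c' where c': "b' = k + c'" using le_Suc_ex[of k b'] False by auto
        obtain r where r: "M = 2*k + r" using le_Suc_ex[OF kM] by auto
        have ck: "c < k" using b c by simp
        have tb2: "\<tau> b = c" using tb c by simp
        have cb2: "cm b' = r + k + c'" using cb c' r by simp
        have adv: "ad (\<tau> b) (cm b') = r + k + c' - c" unfolding tb2 cb2 ad_def using ck by simp
        have e2: "r + k + c' - c + c = r + k + c'" using ck by simp
        have "M - k = r + k" using r by simp
        hence "r + k \<le> r + k + c' - c" using A adv by simp
        hence "c \<le> c'" using e2 by linarith
        hence "b \<le> b'" using c c' by simp
        thus ?thesis using False bk ne b b' by (simp add: key_def)
      qed
    qed
  qed
  have ker: "v = 0\<^sub>v (2*k)" if "v \<in> carrier_vec (2*k)" "E' *\<^sub>v v = 0\<^sub>v M" for v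
    by (rule tri_kernel[OF E' tau tri that])
  have dist: "distinct (cols E')"
  proof (subst distinct_conv_nth, intro allI impI)
    fix b1 b2 assume b1: "b1 < length (cols E')" and b2: "b2 < length (cols E')" and ne: "b1 \<noteq> b2"
    have b1': "b1 < 2*k" and b2': "b2 < 2*k" using b1 b2 E' by auto
    show "cols E' ! b1 \<noteq> cols E' ! b2"
    proof
      assume eq: "cols E' ! b1 = cols E' ! b2"
      hence eq': "col E' b1 = col E' b2" using b1' b2' E' by simp
      have t1: "\<tau> b1 < M" and t2: "\<tau> b2 < M" using tau b1' b2' by auto
      have "E' $$ (\<tau> b1, b2) = col E' b2 $ \<tau> b1" using t1 b2' E' by simp
      also have "\<dots> = col E' b1 $ \<tau> b1" using eq' by simp
      also have "\<dots> = E' $$ (\<tau> b1, b1)" using t1 b1' E' by simp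
      finally have "E' $$ (\<tau> b1, b2) \<noteq> 0" using tau b1' by simp
      hence k1: "key b2 < key b1" using tri b1' b2' ne by auto
      have "E' $$ (\<tau> b2, b1) = col E' b1 $ \<tau> b2" using t2 b1' E' by simp
      also have "\<dots> = col E' b2 $ \<tau> b2" using eq' by simp
      also have "\<dots> = E' $$ (\<tau> b2, b2)" using t2 b2' E' by simp
      finally have "E' $$ (\<tau> b2, b1) \<noteq> 0" using tau b2' by simp
      hence "key b1 < key b2" using tri b1' b2' ne by auto
      thus False using k1 by simp
    qed
  qed
  have li: "V.lin_indpt (set (cols E'))"
  proof (rule ccontr)
    assume "\<not> V.lin_indpt (set (cols E'))"
    hence "V.lin_dep (set (cols E'))" by simp
    then obtain v where "v \<in> carrier_vec (2*k)" "v \<noteq> 0\<^sub>v (2*k)" "E' *\<^sub>v v = 0\<^sub>v M"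
      using V.lin_depE[OF E' _ dist] by blast
    thus False using ker by blast
  qed
  have sub: "set (cols E') \<subseteq> set (cols E)"
  proof
    fix x assume "x \<in> set (cols E')"
    then obtain b where b: "b < 2*k" "x = col E' b" using E' by (auto simp: in_set_conv_nth)
    hence "x = col E (cm b)" using colE' by simp
    thus "x \<in> set (cols E)" using cmM[OF b(1)] E by (auto simp: in_set_conv_nth intro!: exI[of _ "cm b"])
  qed
  have card: "card (set (cols E')) = 2*k" using distinct_card[OF dist] E' by simp
  have ge: "2*k \<le> V.rank E" using V.rank_ge_card_indpt[OF E sub li] card by simp
  have sub2: "set (cols E) \<subseteq> insert (0\<^sub>v M) (set (cols E'))"
  proof
    fix x assume "x \<in> set (cols E)"
    then obtain j where j: "j < M" "x = col E j" using E by (auto simp: in_set_conv_nth)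
    show "x \<in> insert (0\<^sub>v M) (set (cols E'))"
    proof (cases "j < k")
      case True
      hence "x = col E' j" using colE'[of j] j by (simp add: cm_def)
      thus ?thesis using True E' by (auto simp: in_set_conv_nth intro!: exI[of _ j])
    next
      case nk: False
      show ?thesis
      proof (cases "M - k \<le> j")
        case True
        define b where "b = j - (M - 2*k)"
        have b: "b < 2*k" "cm b = j" using True nk j kM by (auto simp: b_def cm_def)
        hence "x = col E' b" using colE'[of b] j by simp
        thus ?thesis using b E' by (auto simp: in_set_conv_nth intro!: exI[of _ b])
      next
        case False
        have "x = 0\<^sub>v M"
        proof (rule eq_vecI)
          fix i assume "i < dim_vec (0\<^sub>v M)"
          hence i: "i < M" by simp
          have "ad i j < M - k" using i j nk False by (auto simp: ad_def)
          thus "x $ i = 0\<^sub>v M $ i" using i j by (simp add: E_def)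
        qed (use j E in simp)
        thus ?thesis by simp
      qed
    qed
  qed
  obtain S where S: "maximal S (\<lambda>T. T \<subseteq> set (cols E) \<and> V.lin_indpt T)"
    using maximal_exists_superset[of "set (cols E)" "\<lambda>T. T \<subseteq> set (cols E) \<and> V.lin_indpt T"
      "set (cols E')"] sub li by blast
  have SE: "S \<subseteq> set (cols E)" and Sli: "V.lin_indpt S" using S by (auto simp: maximal_def)
  have Scar: "S \<subseteq> carrier_vec M" using SE E cols_dim by blast
  have "0\<^sub>v M \<notin> S"
    by (rule V.zero_nin_lin_indpt[OF Scar Sli]) auto
  hence "S \<subseteq> set (cols E')" using SE sub2 by blast
  hence "card S \<le> card (set (cols E'))" by (intro card_mono) auto
  hence "card S \<le> 2*k" using card by simp
  hence le: "V.rank E \<le> 2*k" using V.rank_card_indpt[OF E S] by simp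
  show ?thesis using ge le unfolding E_def by simp
qed

definition hh :: "real \<Rightarrow> nat \<Rightarrow> nat \<Rightarrow> real" where
  "hh \<alpha> M t = (if 2*t < M then 0 else if 2*t = M then - pp \<alpha> t else pp \<alpha> (M - t) - pp \<alpha> t)"

lemma neg1_pow_n: "(-1::real) powi (- int n) = (-1) powi (int n)"
proof -
  have "(-1::real) powi (- int n) = inverse ((-1) ^ n)" by (simp add: power_int_minus)
  also have "inverse ((-1::real)^n) = inverse (-1) ^ n" by (rule power_inverse[symmetric])
  finally show ?thesis by simp
qed

lemma neg1_powi_neg: "(-1::real) powi (- k) = (-1) powi k"
proof (cases "k \<ge> 0")
  case True
  hence "k = int (nat k)" by simp
  then show ?thesis using neg1_pow_n[of "nat k"] by simp
next
  case False
  define n where "n = nat (-k)"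
  have n: "k = - int n" using False by (simp add: n_def)
  show ?thesis unfolding n by (simp only: neg1_pow_n minus_minus)
qed

lemma cfrac_neg: "cfrac \<alpha> (- k) = cfrac \<alpha> k"
  unfolding cfrac_def neg1_powi_neg by (simp add: algebra_simps)

lemma ad_sym: "ad i j = ad j i" by (auto simp: ad_def)

lemma DT_entry:
  assumes "i < M" "j < M"
  shows "(Tmat \<alpha> \<gamma> \<tau> a b M - Cmat \<alpha> \<gamma> \<tau> a b M) $$ (i,j) = mu \<alpha> \<gamma> \<tau> a b M * hh \<alpha> M (ad i j)"
proof -
  have "(Tmat \<alpha> \<gamma> \<tau> a b M - Cmat \<alpha> \<gamma> \<tau> a b M) $$ (i,j) =
     mu \<alpha> \<gamma> \<tau> a b M * (cfrac \<alpha> (int i - int j) - strang_s \<alpha> M (nat ((int i - int j) mod int M)))"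
    using assms by (simp add: Tmat_def Cmat_def algebra_simps)
  also have "cfrac \<alpha> (int i - int j) - strang_s \<alpha> M (nat ((int i - int j) mod int M)) = hh \<alpha> M (ad i j)"
  proof (cases "j \<le> i")
    case True
    define t where "t = i - j"
    have t: "t < M" using assms by (simp add: t_def)
    have d: "int i - int j = int t" using True by (simp add: t_def)
    have m: "nat (int t mod int M) = t" using t by simp
    have adt: "ad i j = t" using True by (simp add: ad_def t_def)
    have cm: "cfrac \<alpha> (int M - int t) = cfrac \<alpha> (int (M - t))" using t by (simp add: of_nat_diff)
    show ?thesis unfolding d m adt using cm t
      by (auto simp: strang_s_def hh_def pp_def)
  next
    case False
    define t where "t = j - i"
    have t: "t < M" "0 < t" using assms False by (auto simp: t_def)
    have d: "int i - int j = - int t" using False by (simp add: t_def)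
    have m0: "(- int t) mod int M = int M - int t"
    proof -
      have "(- int t) mod int M = (int M - int t) mod int M"
        by (metis add.commute diff_conv_add_uminus mod_add_self2)
      also have "\<dots> = int M - int t" using t by (intro mod_pos_pos_trivial) auto
      finally show ?thesis .
    qed
    have m: "nat ((- int t) mod int M) = M - t" unfolding m0 using t by simp
    have adt: "ad i j = t" using False by (simp add: ad_def t_def)
    have cm: "cfrac \<alpha> (int M - int (M - t)) = cfrac \<alpha> (int t)" using t by (simp add: of_nat_diff)
    have cn: "cfrac \<alpha> (- int t) = cfrac \<alpha> (int t)" by (rule cfrac_neg)
    show ?thesis unfolding d m adt cn using cm t
      by (auto simp: strang_s_def hh_def pp_def)
  qed
  finally show ?thesis .
qed

lemma hh_bound:
  fixes \<alpha> :: real assumes "1 < \<alpha>" "\<alpha> < 2" "M \<le> 2*t" "t < M"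
  shows "\<bar>hh \<alpha> M t\<bar> \<le> pp \<alpha> (M - t)"
proof (cases "2*t = M")
  case True
  hence "M - t = t" by simp
  thus ?thesis using True pp_pos[OF assms(1,2), of t] assms by (simp add: hh_def)
next
  case False
  hence lt: "M - t < t" using assms by simp
  have p1: "pp \<alpha> t < pp \<alpha> (M - t)" using pp_mono[OF assms(1,2) _ lt] assms by simp
  have p2: "0 < pp \<alpha> t" using pp_pos[OF assms(1,2), of t] lt by simp
  show ?thesis using False assms p1 p2 by (simp add: hh_def)
qed

lemma hh_nz:
  fixes \<alpha> :: real assumes "1 < \<alpha>" "\<alpha> < 2" "1 \<le> k" "2*k \<le> M"
  shows "hh \<alpha> M (M - k) \<noteq> 0"
proof (cases "2*k = M")
  case True
  hence "2*(M-k) = M" by simp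
  thus ?thesis using pp_pos[OF assms(1,2), of "M-k"] assms by (simp add: hh_def)
next
  case False
  hence lt: "k < M - k" using assms by simp
  have "pp \<alpha> (M - k) < pp \<alpha> k" using pp_mono[OF assms(1,2) assms(3) lt] .
  moreover have "M - (M - k) = k" using assms by simp
  moreover have "\<not> 2 * (M - k) < M" "2 * (M - k) \<noteq> M" using lt by auto
  ultimately show ?thesis by (simp add: hh_def)
qed

lemma tele:
  fixes \<alpha> :: real assumes "1 < \<alpha>" "\<alpha> < 2" "1 \<le> l"
  shows "(\<Sum>m\<in>{l..<l+n}. pp \<alpha> m) = gg \<alpha> l - gg \<alpha> (l+n)"
proof (induction n)
  case 0 thus ?case by simp
next
  case (Suc n)
  have "(\<Sum>m\<in>{l..<l+Suc n}. pp \<alpha> m) = (\<Sum>m\<in>{l..<l+n}. pp \<alpha> m) + pp \<alpha> (l+n)" by simp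
  also have "\<dots> = gg \<alpha> l - gg \<alpha> (l+n) + (gg \<alpha> (l+n) - gg \<alpha> (l+n+1))"
    using Suc.IH pp_tele[OF assms(1,2), of "l+n"] assms(3) by simp
  finally show ?case by simp
qed

lemma row_sum_bound:
  fixes e w :: "nat \<Rightarrow> real"
  assumes i: "i < M"
    and H: "\<forall>j<M. e j \<noteq> 0 \<longrightarrow> M \<le> 2 * ad i j \<and> \<bar>e j\<bar> \<le> w (M - ad i j) \<and> M - ad i j \<in> S"
    and W: "\<forall>m\<in>S. 0 \<le> w m" and S: "finite S"
  shows "(\<Sum>j<M. \<bar>e j\<bar>) \<le> (\<Sum>m\<in>S. w m)"
proof -
  define J where "J = {j. j < M \<and> e j \<noteq> 0}"
  define g where "g j = M - ad i j" for j
  have JM: "J \<subseteq> {..<M}" by (auto simp: J_def)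
  have "(\<Sum>j<M. \<bar>e j\<bar>) = (\<Sum>j\<in>J. \<bar>e j\<bar>)"
    by (rule sum.mono_neutral_right) (auto simp: J_def)
  also have "\<dots> \<le> (\<Sum>j\<in>J. w (g j))"
    by (rule sum_mono) (use H in \<open>auto simp: J_def g_def\<close>)
  also have inj: "inj_on g J"
  proof (rule inj_onI)
    fix j1 j2 assume j1: "j1 \<in> J" and j2: "j2 \<in> J" and eq: "g j1 = g j2"
    have l1: "j1 < M" and l2: "j2 < M" using j1 j2 by (auto simp: J_def)
    have a1: "ad i j1 < M" and a2: "ad i j2 < M" using l1 l2 i by (auto simp: ad_def)
    have ae: "ad i j1 = ad i j2" using eq a1 a2 by (simp add: g_def)
    have big: "M \<le> 2 * ad i j1" using H j1 by (auto simp: J_def)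
    show "j1 = j2"
    proof (cases "j1 \<le> i")
      case c1: True
      show ?thesis
      proof (cases "j2 \<le> i")
        case True thus ?thesis using c1 ae by (simp add: ad_def)
      next
        case False
        hence "ad i j1 = i - j1" "ad i j2 = j2 - i" using c1 by (auto simp: ad_def)
        thus ?thesis using ae big l2 c1 False by linarith
      qed
    next
      case c1: False
      show ?thesis
      proof (cases "j2 \<le> i")
        case True
        hence "ad i j1 = j1 - i" "ad i j2 = i - j2" using c1 by (auto simp: ad_def)
        thus ?thesis using ae big l1 c1 True by linarith
      next
        case False thus ?thesis using c1 ae by (simp add: ad_def)
      qed
    qed
  qed
  have "(\<Sum>j\<in>J. w (g j)) = (\<Sum>m\<in>g`J. w m)" by (simp add: sum.reindex[OF inj])
  also have "\<dots> \<le> (\<Sum>m\<in>S. w m)"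
    by (rule sum_mono2[OF S]) (use H W in \<open>auto simp: J_def g_def\<close>)
  finally show ?thesis .
qed

lemma norm_inf_less:
  assumes "A \<in> carrier_mat M M" "0 < M" "\<forall>i<M. (\<Sum>j<M. \<bar>A $$ (i,j)\<bar>) < B"
  shows "norm_inf A < B"
  unfolding norm_inf_def using assms by (subst Max_less_iff) auto

lemma aux_div: "0 < (G2::real) \<Longrightarrow> 0 < P \<Longrightarrow> G2 < P * G1 \<Longrightarrow> 1/P < G1/G2"
  by (simp add: field_simps)

theorem mainTheorem7:
  fixes \<alpha> \<gamma> \<tau> a b \<epsilon> :: real and M :: nat
  assumes "1 < \<alpha>" and "\<alpha> < 2" and "0 < \<gamma>" and "0 < \<tau>" and "a < b"
    and "8 \<le> M" and "even M"
    and "2 powr \<alpha> * mu \<alpha> \<gamma> \<tau> a b M * theta0 \<alpha> / (real M - 2) powr \<alpha> < \<epsilon>"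
    and "\<epsilon> \<le> mu \<alpha> \<gamma> \<tau> a b M * theta0 \<alpha>"
  shows "\<exists>E F :: real mat.
           E \<in> carrier_mat M M \<and> F \<in> carrier_mat M M \<and>
           transpose_mat E = E \<and> transpose_mat F = F \<and>
           Tmat \<alpha> \<gamma> \<tau> a b M - Cmat \<alpha> \<gamma> \<tau> a b M = E + F \<and>
           int (vec_space.rank M E) =
             2 * (\<lceil>(mu \<alpha> \<gamma> \<tau> a b M * theta0 \<alpha> / \<epsilon>) powr (1 / \<alpha>)\<rceil> + 1) \<and>
           norm_inf E < mu \<alpha> \<gamma> \<tau> a b M *
             (cfrac \<alpha> 0 / 2 - theta \<alpha> / (real M - 1 / 2) powr \<alpha>) \<and>
           norm_inf F < \<epsilon>"
proof -
  note a1 = assms(1) and a2 = assms(2)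
  define \<mu> where "\<mu> = mu \<alpha> \<gamma> \<tau> a b M"
  have hpos: "hstep a b M > 0" using assms(5) by (simp add: hstep_def)
  have mpos: "\<mu> > 0" unfolding \<mu>_def mu_def using hpos assms(3,4) by simp
  have kp: "kap \<alpha> > 0" by (rule kap_pos[OF a1 a2])
  have th0: "theta0 \<alpha> = sqrt 2 * exp (13/12) * kap \<alpha>" by (simp add: theta0_def kap_def)
  have c1: "1 \<le> sqrt 2 * exp (13/12::real)"
  proof -
    have "1 \<le> sqrt (2::real)" by simp
    moreover have "1 \<le> exp (13/12::real)" by simp
    ultimately show ?thesis using mult_mono[of 1 "sqrt 2" 1 "exp (13/12::real)"] by simp
  qed
  have kth0: "kap \<alpha> \<le> theta0 \<alpha>" unfolding th0 using c1 kp
    using mult_right_mono[OF c1, of "kap \<alpha>"] by simp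
  have th0pos: "theta0 \<alpha> > 0" using kth0 kp by simp
  define A where "A = (1 - (1 + \<alpha>) / (5 + \<alpha> / 2)) powr (5 + \<alpha> / 2) * exp (1 + \<alpha>)"
  have thA: "theta \<alpha> = A * kap \<alpha>" by (simp add: theta_def kap_def A_def)
  have A1: "A \<le> 1"
  proof -
    define t where "t = (1 + \<alpha>) / (5 + \<alpha> / 2)"
    define N where "N = 5 + \<alpha> / 2"
    have N: "N > 0" using a1 by (simp add: N_def)
    have tN: "t * N = 1 + \<alpha>" using N by (simp add: t_def N_def)
    have t1: "t < 1" using a2 a1 by (simp add: t_def field_simps)
    have "ln (1 - t) \<le> (1 - t) - 1" using t1 by (intro ln_le_minus_one) simp
    hence "N * ln (1 - t) \<le> N * (- t)" using N by (intro mult_left_mono) auto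
    hence "(1 - t) powr N \<le> exp (- (1 + \<alpha>))"
      using t1 tN by (simp add: powr_def algebra_simps)
    hence "(1 - t) powr N * exp (1 + \<alpha>) \<le> exp (- (1 + \<alpha>)) * exp (1 + \<alpha>)"
      by (intro mult_right_mono) auto
    also have "\<dots> = 1" by (simp flip: exp_add)
    finally show ?thesis by (simp add: A_def t_def N_def)
  qed
  have M2: "real M - 2 > 0" using assms(6) by simp
  have lhs_pos: "2 powr \<alpha> * \<mu> * theta0 \<alpha> / (real M - 2) powr \<alpha> > 0"
    using mpos th0pos M2 by simp
  have epos: "\<epsilon> > 0" using lhs_pos assms(8) unfolding \<mu>_def by linarith
  define X where "X = \<mu> * theta0 \<alpha> / \<epsilon>"
  have X1: "X \<ge> 1" using assms(9) epos by (simp add: X_def \<mu>_def)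
  define q where "q = X powr (1 / \<alpha>)"
  have qpos: "q > 0" using X1 by (simp add: q_def)
  have qa: "q powr \<alpha> = X" using X1 a1 by (simp add: q_def powr_powr)
  define K where "K = \<lceil>q\<rceil> + 1"
  have K1: "K \<ge> 2" using qpos by (simp add: K_def)
  define k where "k = nat K"
  have kK: "int k = K" using K1 by (simp add: k_def)
  have k1: "1 \<le> k" using K1 kK by linarith
  have kq: "real k > q"
  proof -
    have "real k = real_of_int K" using kK by (metis of_int_of_nat_eq)
    moreover have "q \<le> real_of_int \<lceil>q\<rceil>" by (rule le_of_int_ceiling)
    moreover have "real_of_int K = real_of_int \<lceil>q\<rceil> + 1" by (simp add: K_def)
    ultimately show ?thesis by linarith
  qed
  have XM: "X < ((real M - 2) / 2) powr \<alpha>"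
  proof -
    have "2 powr \<alpha> * (\<mu> * theta0 \<alpha>) < \<epsilon> * (real M - 2) powr \<alpha>"
      using assms(8) M2 by (simp add: \<mu>_def field_simps)
    hence "\<mu> * theta0 \<alpha> / \<epsilon> < (real M - 2) powr \<alpha> / 2 powr \<alpha>"
      using epos by (simp add: field_simps)
    thus ?thesis using M2 by (simp add: X_def powr_divide)
  qed
  have qM: "q < (real M - 2) / 2"
  proof -
    have "q < (((real M - 2) / 2) powr \<alpha>) powr (1/\<alpha>)"
      unfolding q_def using XM X1 a1 by (intro powr_less_mono2) auto
    also have "\<dots> = (real M - 2) / 2" using M2 a1 by (simp add: powr_powr)
    finally show ?thesis .
  qed
  obtain h where Mh: "M = 2 * h" using assms(7) by (auto elim: evenE)
  have Mdiv: "M div 2 = h" using Mh by simp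
  have "q \<le> real_of_int (int h - 1)" using qM Mh by simp
  hence "\<lceil>q\<rceil> \<le> int h - 1" by (rule ceiling_le)
  hence kh: "k \<le> h" using kK K_def by linarith
  have kM: "2 * k \<le> M" using kh Mh by simp
  define E where "E = mat M M (\<lambda>(i,j). if M - k \<le> ad i j then \<mu> * hh \<alpha> M (ad i j) else 0)"
  define F where "F = mat M M (\<lambda>(i,j). if M - k \<le> ad i j then 0 else \<mu> * hh \<alpha> M (ad i j))"
  have Ec: "E \<in> carrier_mat M M" and Fc: "F \<in> carrier_mat M M" by (simp_all add: E_def F_def)
  have Et: "transpose_mat E = E" by (rule eq_matI) (auto simp: E_def ad_sym)
  have Ft: "transpose_mat F = F" by (rule eq_matI) (auto simp: F_def ad_sym)
  have TC: "Tmat \<alpha> \<gamma> \<tau> a b M - Cmat \<alpha> \<gamma> \<tau> a b M = E + F"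
  proof -
    have Cd: "dim_row (Cmat \<alpha> \<gamma> \<tau> a b M) = M" "dim_col (Cmat \<alpha> \<gamma> \<tau> a b M) = M"
      by (simp_all add: Cmat_def)
    show ?thesis
    proof (rule eq_matI)
      fix i j assume "i < dim_row (E + F)" "j < dim_col (E + F)"
      hence ij: "i < M" "j < M" by (auto simp: E_def F_def)
      show "(Tmat \<alpha> \<gamma> \<tau> a b M - Cmat \<alpha> \<gamma> \<tau> a b M) $$ (i, j) = (E + F) $$ (i, j)"
        unfolding DT_entry[OF ij] using ij by (simp add: E_def F_def \<mu>_def)
    qed (simp_all add: E_def F_def Cd)
  qed
  have rk: "vec_space.rank M E = 2 * k"
    unfolding E_def
    by (rule rank_E[OF k1 kM]) (use hh_nz[OF a1 a2 k1 kM] mpos in simp)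
  have ggu: "gg \<alpha> (k+1) \<le> kap \<alpha> / real k powr \<alpha>"
  proof -
    have ru: "(real (k+1) - \<alpha>/2) powr \<alpha> * Gamma (real (k+1) - \<alpha>/2) \<le> Gamma (real (k+1) + \<alpha>/2)"
      by (rule ratio_upper[OF a1 a2]) simp
    have g1: "Gamma (real (k+1) - \<alpha>/2) > 0" using a2 by (intro Gamma_real_pos) simp
    have g2: "Gamma (real (k+1) + \<alpha>/2) > 0" using a1 by (intro Gamma_real_pos) simp
    have kpos: "real k powr \<alpha> > 0" using k1 by simp
    have mono: "real k powr \<alpha> \<le> (real (k+1) - \<alpha>/2) powr \<alpha>"
      using a1 a2 k1 by (intro powr_mono2) auto
    have "real k powr \<alpha> * Gamma (real (k+1) - \<alpha>/2) \<le> Gamma (real (k+1) + \<alpha>/2)"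
      using mult_right_mono[OF mono, of "Gamma (real (k+1) - \<alpha>/2)"] g1 ru by linarith
    hence "Gamma (real (k+1) - \<alpha>/2) / Gamma (real (k+1) + \<alpha>/2) \<le> 1 / real k powr \<alpha>"
      using g2 kpos by (simp add: field_simps)
    thus ?thesis unfolding gg_def using kp mult_left_mono[of _ _ "kap \<alpha>"]
      by (metis (no_types, lifting) less_imp_le times_divide_eq_right mult.right_neutral)
  qed
  have ggl: "kap \<alpha> / (real M - 1/2) powr \<alpha> < gg \<alpha> (k+1)"
  proof -
    have rl: "Gamma (real (k+1) + \<alpha>/2) \<le> (real (k+1) + \<alpha>/2 - 1) powr \<alpha> * Gamma (real (k+1) - \<alpha>/2)"
      by (rule ratio_lower[OF a1 a2]) simp
    have g1: "Gamma (real (k+1) - \<alpha>/2) > 0" using a2 by (intro Gamma_real_pos) simp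
    have g2: "Gamma (real (k+1) + \<alpha>/2) > 0" using a1 by (intro Gamma_real_pos) simp
    have lt: "real (k+1) + \<alpha>/2 - 1 < real M - 1/2" using kh Mh a2 assms(6) by simp
    have pos: "real (k+1) + \<alpha>/2 - 1 > 0" using a1 by simp
    have mono: "(real (k+1) + \<alpha>/2 - 1) powr \<alpha> < (real M - 1/2) powr \<alpha>"
      using lt pos a1 by (intro powr_less_mono2) auto
    have pp1: "(real (k+1) + \<alpha>/2 - 1) powr \<alpha> > 0" using pos by simp
    have "Gamma (real (k+1) + \<alpha>/2) < (real M - 1/2) powr \<alpha> * Gamma (real (k+1) - \<alpha>/2)"
      using rl mult_strict_right_mono[OF mono g1] by linarith
    moreover have "(real M - 1/2) powr \<alpha> > 0" using pp1 mono by linarith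
    ultimately have "1 / (real M - 1/2) powr \<alpha> < Gamma (real (k+1) - \<alpha>/2) / Gamma (real (k+1) + \<alpha>/2)"
      using g2 by (intro aux_div) auto
    hence "kap \<alpha> * (1 / (real M - 1/2) powr \<alpha>) < kap \<alpha> * (Gamma (real (k+1) - \<alpha>/2) / Gamma (real (k+1) + \<alpha>/2))"
      using kp by (intro mult_strict_left_mono) auto
    thus ?thesis unfolding gg_def by simp
  qed
  have Mpos: "0 < M" using assms(6) by simp
  have normE: "norm_inf E < \<mu> * (cfrac \<alpha> 0 / 2 - theta \<alpha> / (real M - 1 / 2) powr \<alpha>)"
  proof (rule norm_inf_less[OF Ec Mpos], intro allI impI)
    fix i assume i: "i < M"
    define e where "e j = (if M - k \<le> ad i j then \<mu> * hh \<alpha> M (ad i j) else 0)" for j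
    have "(\<Sum>j<M. \<bar>E $$ (i,j)\<bar>) = (\<Sum>j<M. \<bar>e j\<bar>)"
      using i by (intro sum.cong) (auto simp: E_def e_def)
    also have "\<dots> \<le> (\<Sum>m\<in>{1..<1+k}. \<mu> * pp \<alpha> m)"
    proof (rule row_sum_bound[OF i])
      show "\<forall>j<M. e j \<noteq> 0 \<longrightarrow> M \<le> 2 * ad i j \<and> \<bar>e j\<bar> \<le> \<mu> * pp \<alpha> (M - ad i j) \<and> M - ad i j \<in> {1..<1+k}"
      proof (intro allI impI)
        fix j assume j: "j < M" and nz: "e j \<noteq> 0"
        have c: "M - k \<le> ad i j" using nz by (auto simp: e_def split: if_splits)
        have adM: "ad i j < M" using i j by (auto simp: ad_def)
        have big: "M \<le> 2 * ad i j" using c kM by linarith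
        have "\<bar>e j\<bar> = \<mu> * \<bar>hh \<alpha> M (ad i j)\<bar>" using c mpos by (simp add: e_def abs_mult)
        also have "\<dots> \<le> \<mu> * pp \<alpha> (M - ad i j)"
          using hh_bound[OF a1 a2 big adM] mpos by (intro mult_left_mono) auto
        finally show "M \<le> 2 * ad i j \<and> \<bar>e j\<bar> \<le> \<mu> * pp \<alpha> (M - ad i j) \<and> M - ad i j \<in> {1..<1+k}"
          using big c adM by auto
      qed
      show "\<forall>m\<in>{1..<1+k}. 0 \<le> \<mu> * pp \<alpha> m"
        using pp_pos[OF a1 a2] mpos by (auto intro!: mult_nonneg_nonneg less_imp_le)
    qed simp
    also have "\<dots> = \<mu> * (gg \<alpha> 1 - gg \<alpha> (1+k))"
      unfolding sum_distrib_left[symmetric] tele[OF a1 a2 order_refl] ..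
    also have "\<dots> < \<mu> * (cfrac \<alpha> 0 / 2 - theta \<alpha> / (real M - 1 / 2) powr \<alpha>)"
    proof -
      have "theta \<alpha> / (real M - 1 / 2) powr \<alpha> \<le> kap \<alpha> / (real M - 1/2) powr \<alpha>"
        unfolding thA using A1 kp by (intro divide_right_mono) auto
      hence "theta \<alpha> / (real M - 1 / 2) powr \<alpha> < gg \<alpha> (1+k)" using ggl by simp
      thus ?thesis using mpos c0_half[OF a1 a2] by (intro mult_strict_left_mono) auto
    qed
    finally show "(\<Sum>j<M. \<bar>E $$ (i,j)\<bar>) < \<mu> * (cfrac \<alpha> 0 / 2 - theta \<alpha> / (real M - 1 / 2) powr \<alpha>)" .
  qed
  have normF: "norm_inf F < \<epsilon>"
  proof (rule norm_inf_less[OF Fc Mpos], intro allI impI)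
    fix i assume i: "i < M"
    define e where "e j = (if M - k \<le> ad i j then 0 else \<mu> * hh \<alpha> M (ad i j))" for j
    have "(\<Sum>j<M. \<bar>F $$ (i,j)\<bar>) = (\<Sum>j<M. \<bar>e j\<bar>)"
      using i by (intro sum.cong) (auto simp: F_def e_def)
    also have "\<dots> \<le> (\<Sum>m\<in>{k+1..<k+1+(h-k)}. \<mu> * pp \<alpha> m)"
    proof (rule row_sum_bound[OF i])
      show "\<forall>j<M. e j \<noteq> 0 \<longrightarrow> M \<le> 2 * ad i j \<and> \<bar>e j\<bar> \<le> \<mu> * pp \<alpha> (M - ad i j) \<and> M - ad i j \<in> {k+1..<k+1+(h-k)}"
      proof (intro allI impI)
        fix j assume j: "j < M" and nz: "e j \<noteq> 0"
        have c: "\<not> M - k \<le> ad i j" and hnz: "hh \<alpha> M (ad i j) \<noteq> 0"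
          using nz by (auto simp: e_def split: if_splits)
        have big: "M \<le> 2 * ad i j" using hnz by (auto simp: hh_def split: if_splits)
        have adM: "ad i j < M" using i j by (auto simp: ad_def)
        have "\<bar>e j\<bar> = \<mu> * \<bar>hh \<alpha> M (ad i j)\<bar>" using c mpos by (simp add: e_def abs_mult)
        also have "\<dots> \<le> \<mu> * pp \<alpha> (M - ad i j)"
          using hh_bound[OF a1 a2 big adM] mpos by (intro mult_left_mono) auto
        finally show "M \<le> 2 * ad i j \<and> \<bar>e j\<bar> \<le> \<mu> * pp \<alpha> (M - ad i j) \<and> M - ad i j \<in> {k+1..<k+1+(h-k)}"
          using big c adM kh Mh by auto
      qed
      show "\<forall>m\<in>{k+1..<k+1+(h-k)}. 0 \<le> \<mu> * pp \<alpha> m"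
        using pp_pos[OF a1 a2] mpos by (auto intro!: mult_nonneg_nonneg less_imp_le)
    qed simp
    also have "\<dots> = \<mu> * (gg \<alpha> (k+1) - gg \<alpha> (k+1+(h-k)))"
    proof -
      have tl: "(\<Sum>m\<in>{k+1..<k+1+(h-k)}. pp \<alpha> m) = gg \<alpha> (k+1) - gg \<alpha> (k+1+(h-k))"
        by (rule tele[OF a1 a2]) simp
      show ?thesis unfolding sum_distrib_left[symmetric] tl ..
    qed
    also have "\<dots> < \<mu> * gg \<alpha> (k+1)"
      using gg_pos[OF a1 a2, of "k+1+(h-k)"] mpos by simp
    also have "\<dots> \<le> \<mu> * (kap \<alpha> / real k powr \<alpha>)"
      using ggu mpos by (intro mult_left_mono) auto
    also have "\<dots> \<le> \<mu> * (theta0 \<alpha> / real k powr \<alpha>)"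
      using kth0 mpos k1 by (intro mult_left_mono divide_right_mono) auto
    also have "\<dots> < \<mu> * (theta0 \<alpha> / q powr \<alpha>)"
    proof -
      have lt: "q powr \<alpha> < real k powr \<alpha>" using qpos kq a1 by (intro powr_less_mono2) auto
      have p1: "0 < real k powr \<alpha> * q powr \<alpha>" using qpos k1 by (intro mult_pos_pos) auto
      have "theta0 \<alpha> / real k powr \<alpha> < theta0 \<alpha> / q powr \<alpha>"
        by (rule divide_strict_left_mono[OF lt th0pos p1])
      thus ?thesis using mpos by (rule mult_strict_left_mono)
    qed
    also have "\<dots> = \<epsilon>" unfolding qa X_def using epos th0pos mpos by (simp add: field_simps)
    finally show "(\<Sum>j<M. \<bar>F $$ (i,j)\<bar>) < \<epsilon>" .
  qed
  have rkint: "int (vec_space.rank M E) =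
             2 * (\<lceil>(mu \<alpha> \<gamma> \<tau> a b M * theta0 \<alpha> / \<epsilon>) powr (1 / \<alpha>)\<rceil> + 1)"
    unfolding rk using kK by (simp add: K_def q_def X_def \<mu>_def)
  show ?thesis
    using Ec Fc Et Ft TC rkint normE normF unfolding \<mu>_def by blast
qed

end
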